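(* Let $G$ be a finite simple graph whose vertices carry positive integer weights, let $t\in\mathbb{N}$, and let $v\in V(G)$ have weight $t$. Let $G(v)$ denote the weighted graph obtained from $G$ by replacing $v$ with an independent set $\{v_1,\dots,v_t\}$ of $t$ new vertices, each of weight $1$, where each $v_j$ is adjacent to exactly the vertices $w$ that were adjacent to $v$ in $G$; all other vertices, edges and weights are unchanged. Then weighted Grim played on $G$ and weighted Grim played on $G(v)$ have the same outcome: $G$ is an $\mathcal{N}$ position if and only if $G(v)$ is an $\mathcal{N}$ position.
   Context: Grim is a two-player game on a finite simple undirected graph. Any isolated vertices of the starting graph are deleted before play begins. Players alternate moves; in ordinary (unweighted) Grim a move consists of selecting a vertex of the current graph and deleting it together with all its incident edges, after which every vertex that has become isolated is also deleted. The player who makes the last legal move wins (a player facing the empty graph has no move and loses). In weighted Grim each vertex carries a positive integer weight; a vertex of weight $t$ is deleted only once it has been selected $t$ times (each selection is a move and lowers its remaining weight by one, the selection that brings it to zero deleting it with its incident edges), or when it becomes isolated, in which case it is deleted; ordinary Grim is weighted Grim with all weights equal to $1$. A position is an $\mathcal{N}$ position if the player about to move has a winning strategy, and a $\mathcal{P}$ position otherwise. *)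

theory Defs
  imports Main
begin

text \<open>A simple graph is given by a symmetric irreflexive edge
relation E on a vertex type; a position of the game is the current (finite)
vertex set V together with the current remaining weights w (only the values
on V matter).  The current graph is the subgraph induced by E on V.\<close>

definition grim_isolated :: "('a \<Rightarrow> 'a \<Rightarrow> bool) \<Rightarrow> 'a set \<Rightarrow> 'a \<Rightarrow> bool" where
  "grim_isolated E V x \<longleftrightarrow> \<not> (\<exists>u\<in>V. E x u)"

definition grim_clean :: "('a \<Rightarrow> 'a \<Rightarrow> bool) \<Rightarrow> 'a set \<Rightarrow> 'a set" where
  "grim_clean E V = {x \<in> V. \<not> grim_isolated E V x}"

definition grim_move :: "('a \<Rightarrow> 'a \<Rightarrow> bool) \<Rightarrow> 'a set \<Rightarrow> ('a \<Rightarrow> nat)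
      \<Rightarrow> 'a set \<Rightarrow> ('a \<Rightarrow> nat) \<Rightarrow> bool" where
  "grim_move E V w V' w' \<longleftrightarrow>
     (\<exists>x\<in>V. (1 < w x \<and> V' = V \<and> w' = w(x := w x - 1))
          \<or> (w x \<le> 1 \<and> V' = grim_clean E (V - {x}) \<and> w' = w))"

text \<open>N positions (player to move wins) and P positions (player to move loses),
normal play convention.\<close>
inductive grim_N :: "('a \<Rightarrow> 'a \<Rightarrow> bool) \<Rightarrow> 'a set \<Rightarrow> ('a \<Rightarrow> nat) \<Rightarrow> bool"
  and grim_P :: "('a \<Rightarrow> 'a \<Rightarrow> bool) \<Rightarrow> 'a set \<Rightarrow> ('a \<Rightarrow> nat) \<Rightarrow> bool"
  for E where
  N_intro: "grim_move E V w V' w' \<Longrightarrow> grim_P E V' w' \<Longrightarrow> grim_N E V w"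
| P_intro: "(\<forall>V' w'. grim_move E V w V' w' \<longrightarrow> grim_N E V' w') \<Longrightarrow> grim_P E V w"

definition weighted_grim_N :: "'a set \<Rightarrow> ('a \<Rightarrow> 'a \<Rightarrow> bool) \<Rightarrow> ('a \<Rightarrow> nat) \<Rightarrow> bool" where
  "weighted_grim_N V E w \<longleftrightarrow> grim_N E (grim_clean E V) w"

definition split_V :: "'a set \<Rightarrow> 'a \<Rightarrow> nat \<Rightarrow> ('a + nat) set" where
  "split_V V v t = Inl ` (V - {v}) \<union> Inr ` {1..t}"

fun split_E :: "('a \<Rightarrow> 'a \<Rightarrow> bool) \<Rightarrow> 'a \<Rightarrow> ('a + nat) \<Rightarrow> ('a + nat) \<Rightarrow> bool" where
  "split_E E v (Inl a) (Inl b) = E a b"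
| "split_E E v (Inl a) (Inr j) = E a v"
| "split_E E v (Inr i) (Inl b) = E v b"
| "split_E E v (Inr i) (Inr j) = False"

fun split_w :: "('a \<Rightarrow> nat) \<Rightarrow> ('a + nat) \<Rightarrow> nat" where
  "split_w w (Inl a) = w a"
| "split_w w (Inr j) = 1"

end

theory Submission
  imports Defs
begin

lemma bex_img: "(\<exists>x\<in>f`A. P x) \<longleftrightarrow> (\<exists>y\<in>A. P (f y))" by blast

lemma clean_split:
  "grim_clean (split_E E v) (Inl`A' \<union> Inr`S') =
   Inl`{b\<in>A'. (\<exists>c\<in>A'. E b c) \<or> (S'\<noteq>{} \<and> E b v)} \<union> Inr`{j\<in>S'. \<exists>c\<in>A'. E v c}"
  unfolding grim_clean_def grim_isolated_def
  apply (rule set_eqI)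
  subgoal for x by (cases x) (auto simp: bex_Un bex_img)
  done

lemma clean_idem:
  assumes "\<And>x y. E x y \<Longrightarrow> E y x"
  shows "grim_clean E (grim_clean E X) = grim_clean E X"
  unfolding grim_clean_def grim_isolated_def using assms by blast

definition Rel where
  "Rel E v A w B u \<longleftrightarrow> grim_clean E A = A \<and>
     (\<exists>S. B = Inl`(A-{v}) \<union> Inr`S \<and> (v\<in>A \<longrightarrow> finite S \<and> card S = w v \<and> 0 < w v)
        \<and> (v\<notin>A \<longrightarrow> S={}) \<and> (\<forall>a\<in>A-{v}. u (Inl a) = w a) \<and> (\<forall>j\<in>S. u (Inr j) \<le> 1))"

lemma bisim:
  assumes fwd: "\<And>A w B u A' w'. R A w B u \<Longrightarrow> grim_move Ga A w A' w' \<Longrightarrow>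
                  \<exists>B' u'. grim_move Gb B u B' u' \<and> R A' w' B' u'"
    and bwd: "\<And>A w B u B' u'. R A w B u \<Longrightarrow> grim_move Gb B u B' u' \<Longrightarrow>
                  \<exists>A' w'. grim_move Ga A w A' w' \<and> R A' w' B' u'"
  shows "grim_N Ga A w \<Longrightarrow> R A w B u \<Longrightarrow> grim_N Gb B u"
    and "grim_P Ga A w \<Longrightarrow> R A w B u \<Longrightarrow> grim_P Gb B u"
proof (induction arbitrary: B u and B u rule: grim_N_grim_P.inducts)
  case (N_intro V w V' w')
  then obtain B' u' where "grim_move Gb B u B' u'" "R V' w' B' u'" using fwd by blast
  then show ?case using N_intro grim_N_grim_P.N_intro by blast
next
  case (P_intro V w)
  show ?case
  proof (rule grim_N_grim_P.P_intro, intro allI impI)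
    fix B' u' assume "grim_move Gb B u B' u'"
    then obtain A' w' where "grim_move Ga V w A' w'" "R A' w' B' u'" using bwd P_intro by blast
    then show "grim_N Gb B' u'" using P_intro by blast
  qed
qed

lemma cl_a:
  assumes irr: "\<And>x. \<not> E x x" and "a\<in>A" "a\<noteq>v" and hv: "S\<noteq>{} \<longleftrightarrow> v\<in>A"
  shows "grim_clean (split_E E v) (Inl`(A-{v}) \<union> Inr`S - {Inl a}) =
    Inl`(grim_clean E (A-{a}) - {v}) \<union> Inr`(if v \<in> grim_clean E (A-{a}) then S else {})"
proof -
  have e: "Inl`(A-{v}) \<union> Inr`S - {Inl a} = Inl`(A-{v}-{a}) \<union> Inr`S" by auto
  have i1: "{b\<in>A-{v}-{a}. (\<exists>c\<in>A-{v}-{a}. E b c) \<or> (S\<noteq>{} \<and> E b v)} = grim_clean E (A-{a}) - {v}"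
    using hv assms(3) unfolding grim_clean_def grim_isolated_def by auto
  have i2: "{j\<in>S. \<exists>c\<in>A-{v}-{a}. E v c} = (if v \<in> grim_clean E (A-{a}) then S else {})"
    using hv irr assms(3) unfolding grim_clean_def grim_isolated_def by auto
  show ?thesis unfolding e clean_split i1 i2 ..
qed

lemma cl_big:
  assumes irr: "\<And>x. \<not> E x x" and cA: "grim_clean E A = A" and "v\<in>A" "j\<in>S" "S-{j}\<noteq>{}"
  shows "grim_clean (split_E E v) (Inl`(A-{v}) \<union> Inr`S - {Inr j}) = Inl`(A-{v}) \<union> Inr`(S-{j})"
proof -
  have h: "\<forall>b\<in>A. \<exists>c\<in>A. E b c" using cA unfolding grim_clean_def grim_isolated_def by blast
  have e: "Inl`(A-{v}) \<union> Inr`S - {Inr j} = Inl`(A-{v}) \<union> Inr`(S-{j})" by auto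
  have i1: "{b\<in>A-{v}. (\<exists>c\<in>A-{v}. E b c) \<or> (S-{j}\<noteq>{} \<and> E b v)} = A-{v}"
    using h assms(5) by auto
  have i2: "{j'\<in>S-{j}. \<exists>c\<in>A-{v}. E v c} = S-{j}"
    proof -
    obtain c where "c\<in>A" "E v c" using h assms(3) by blast
    then have "c \<noteq> v" using irr by blast
    then show ?thesis using \<open>c\<in>A\<close> \<open>E v c\<close> by blast
  qed
  show ?thesis unfolding e clean_split i1 i2 ..
qed

lemma cl_one:
  shows "grim_clean (split_E E v) (Inl`(A-{v}) \<union> Inr`{j} - {Inr j}) = Inl`(grim_clean E (A-{v}) - {v}) \<union> Inr`{}"
proof -
  have e: "Inl`(A-{v}) \<union> Inr`{j} - {Inr j} = Inl`(A-{v}) \<union> Inr`{}" by auto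
  have i1: "{b\<in>A-{v}. (\<exists>c\<in>A-{v}. E b c) \<or> ({}\<noteq>({}::nat set) \<and> E b v)} = grim_clean E (A-{v}) - {v}"
    unfolding grim_clean_def grim_isolated_def by auto
  show ?thesis unfolding e clean_split i1 by simp
qed

lemma fwd:
  assumes sym: "\<And>x y. E x y \<Longrightarrow> E y x" and irr: "\<And>x. \<not> E x x"
    and R: "Rel E v A w B u" and mv: "grim_move E A w A' w'"
  shows "\<exists>B' u'. grim_move (split_E E v) B u B' u' \<and> Rel E v A' w' B' u'"
proof -
  from R obtain S where cA: "grim_clean E A = A" and B: "B = Inl`(A-{v}) \<union> Inr`S"
    and Sv: "v\<in>A \<longrightarrow> finite S \<and> card S = w v \<and> 0 < w v" and Sn: "v\<notin>A \<longrightarrow> S={}"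
    and uw: "\<forall>a\<in>A-{v}. u (Inl a) = w a" and u1: "\<forall>j\<in>S. u (Inr j) \<le> 1"
    unfolding Rel_def by blast
  have hv: "S\<noteq>{} \<longleftrightarrow> v\<in>A" using Sv Sn by fastforce
  from mv obtain x where x: "x\<in>A" and br: "(1 < w x \<and> A' = A \<and> w' = w(x := w x - 1))
      \<or> (w x \<le> 1 \<and> A' = grim_clean E (A - {x}) \<and> w' = w)" unfolding grim_move_def by blast
  show ?thesis
  proof (cases "x = v")
    case True
    then have fS: "finite S" and cS: "card S = w v" and wv: "0 < w v" using Sv x by auto
    then obtain j where j: "j \<in> S" using hv x True by blast
    have jB: "Inr j \<in> B" using B j by auto
    show ?thesis
    proof (cases "1 < w v")
      case True
      hence A': "A' = A" "w' = w(v := w v - 1)" using br \<open>x=v\<close> by auto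
      have ne: "S - {j} \<noteq> {}"
      proof
        assume "S - {j} = {}" then have "S = {j}" using j by auto
        then show False using cS True by simp
      qed
      have cl: "grim_clean (split_E E v) (B - {Inr j}) = Inl`(A-{v}) \<union> Inr`(S-{j})"
        using cl_big[of E, OF irr cA] x \<open>x=v\<close> j ne B by simp
      have m: "grim_move (split_E E v) B u (Inl`(A-{v}) \<union> Inr`(S-{j})) u"
        unfolding grim_move_def using jB u1 j cl by (intro bexI[of _ "Inr j"]) auto
      have "Rel E v A' w' (Inl`(A-{v}) \<union> Inr`(S-{j})) u"
        unfolding Rel_def A' using cA fS cS True uw u1 x \<open>x=v\<close>
        by (intro conjI exI[of _ "S-{j}"]) (auto simp: j)
      then show ?thesis using m by blast
    next
      case False
      hence A': "A' = grim_clean E (A - {v})" "w' = w" using br \<open>x=v\<close> by auto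
      have "card S = 1" using False cS wv by simp
      then have Sj: "S = {j}" using j by (metis card_1_singletonE singletonD)
      have cl: "grim_clean (split_E E v) (B - {Inr j}) = Inl`(A' - {v}) \<union> Inr`{}"
        using cl_one B Sj A' by simp
      have m: "grim_move (split_E E v) B u (Inl`(A' - {v}) \<union> Inr`{}) u"
        unfolding grim_move_def using jB u1 j cl by (intro bexI[of _ "Inr j"]) auto
      have "Rel E v A' w' (Inl`(A' - {v}) \<union> Inr`{}) u"
      proof -
        have cA': "grim_clean E A' = A'" using A' clean_idem[of E "A - {v}", OF sym] by simp
        have sub: "A' \<subseteq> A - {v}" using A' unfolding grim_clean_def by auto
        show ?thesis unfolding Rel_def using cA' sub uw A'
          by (intro conjI exI[of _ "{}"]) auto
      qed
      then show ?thesis using m by blast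
    qed
  next
    case False
    have xB: "Inl x \<in> B" using B x False by auto
    have ux: "u (Inl x) = w x" using uw x False by auto
    show ?thesis
    proof (cases "1 < w x")
      case True
      hence A': "A' = A" "w' = w(x := w x - 1)" using br by auto
      have m: "grim_move (split_E E v) B u B (u(Inl x := u (Inl x) - 1))"
        unfolding grim_move_def using xB ux True by (intro bexI[of _ "Inl x"]) auto
      have "Rel E v A' w' B (u(Inl x := u (Inl x) - 1))"
        unfolding Rel_def A' using cA B Sv Sn uw u1 ux False
        by (intro conjI exI[of _ S]) auto
      then show ?thesis using m by blast
    next
      case nb: False
      hence A': "A' = grim_clean E (A - {x})" "w' = w" using br by auto
      define S' where "S' = (if v \<in> A' then S else {})"
      have cl: "grim_clean (split_E E v) (B - {Inl x}) = Inl`(A' - {v}) \<union> Inr`S'"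
        using cl_a[of E, OF irr x False hv] B A' S'_def by simp
      have m: "grim_move (split_E E v) B u (Inl`(A' - {v}) \<union> Inr`S') u"
        unfolding grim_move_def using xB ux nb cl by (intro bexI[of _ "Inl x"]) auto
      have sub: "A' \<subseteq> A - {x}" using A' unfolding grim_clean_def by auto
      have "Rel E v A' w' (Inl`(A' - {v}) \<union> Inr`S') u"
        unfolding Rel_def using clean_idem[of E "A - {x}", OF sym] A' sub Sv Sn uw u1 S'_def
        by (intro conjI exI[of _ S']) auto
      then show ?thesis using m by blast
    qed
  qed
qed

lemma bwd:
  assumes sym: "\<And>x y. E x y \<Longrightarrow> E y x" and irr: "\<And>x. \<not> E x x"
    and R: "Rel E v A w B u" and mv: "grim_move (split_E E v) B u B' u'"
  shows "\<exists>A' w'. grim_move E A w A' w' \<and> Rel E v A' w' B' u'"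
proof -
  from R obtain S where cA: "grim_clean E A = A" and B: "B = Inl`(A-{v}) \<union> Inr`S"
    and Sv: "v\<in>A \<longrightarrow> finite S \<and> card S = w v \<and> 0 < w v" and Sn: "v\<notin>A \<longrightarrow> S={}"
    and uw: "\<forall>a\<in>A-{v}. u (Inl a) = w a" and u1: "\<forall>j\<in>S. u (Inr j) \<le> 1"
    unfolding Rel_def by blast
  have hv: "S\<noteq>{} \<longleftrightarrow> v\<in>A" using Sv Sn by fastforce
  from mv obtain y where y: "y\<in>B" and br: "(1 < u y \<and> B' = B \<and> u' = u(y := u y - 1))
      \<or> (u y \<le> 1 \<and> B' = grim_clean (split_E E v) (B - {y}) \<and> u' = u)"
    unfolding grim_move_def by blast
  show ?thesis
  proof (cases y)
    case (Inr j)
    have j: "j \<in> S" using y B Inr by auto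
    have vA: "v \<in> A" using hv j by blast
    then have fS: "finite S" and cS: "card S = w v" and wv: "0 < w v" using Sv by auto
    have B': "B' = grim_clean (split_E E v) (B - {Inr j})" "u' = u" using br u1 j Inr by auto
    show ?thesis
    proof (cases "1 < w v")
      case True
      have ne: "S - {j} \<noteq> {}"
      proof
        assume "S - {j} = {}" then have "S = {j}" using j by auto
        then show False using cS True by simp
      qed
      have cl: "B' = Inl`(A-{v}) \<union> Inr`(S-{j})"
        using cl_big[of E, OF irr cA] vA j ne B B' by simp
      have m: "grim_move E A w A (w(v := w v - 1))"
        unfolding grim_move_def using vA True by (intro bexI[of _ v]) auto
      have "Rel E v A (w(v := w v - 1)) B' u'"
        unfolding Rel_def cl B' using cA fS cS True uw u1 vA
        by (intro conjI exI[of _ "S-{j}"]) (auto simp: j)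
      then show ?thesis using m by blast
    next
      case False
      define A' where "A' = grim_clean E (A - {v})"
      have "card S = 1" using False cS wv by simp
      then have Sj: "S = {j}" using j by (metis card_1_singletonE singletonD)
      have cl: "B' = Inl`(A' - {v}) \<union> Inr`{}"
        using cl_one B Sj B' A'_def by simp
      have m: "grim_move E A w A' w"
        unfolding grim_move_def A'_def using vA False by (intro bexI[of _ v]) auto
      have "Rel E v A' w B' u'"
      proof -
        have cA': "grim_clean E A' = A'" using A'_def clean_idem[of E "A - {v}", OF sym] by simp
        have sub: "A' \<subseteq> A - {v}" using A'_def unfolding grim_clean_def by auto
        show ?thesis unfolding Rel_def cl using cA' sub uw B'
          by (intro conjI exI[of _ "{}"]) auto
      qed
      then show ?thesis using m by blast
    qed
  next
    case (Inl x)
    have x: "x \<in> A" and False: "x \<noteq> v" using y B Inl by auto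
    have ux: "u (Inl x) = w x" using uw x False by auto
    show ?thesis
    proof (cases "1 < w x")
      case True
      hence B': "B' = B" "u' = u(Inl x := u (Inl x) - 1)" using br Inl ux by auto
      have m: "grim_move E A w A (w(x := w x - 1))"
        unfolding grim_move_def using x True by (intro bexI[of _ x]) auto
      have "Rel E v A (w(x := w x - 1)) B' u'"
        unfolding Rel_def B' using cA B Sv Sn uw u1 ux False
        by (intro conjI exI[of _ S]) auto
      then show ?thesis using m by blast
    next
      case nb: False
      hence B': "B' = grim_clean (split_E E v) (B - {Inl x})" "u' = u" using br Inl ux by auto
      define A' where "A' = grim_clean E (A - {x})"
      define S' where "S' = (if v \<in> A' then S else {})"
      have cl: "B' = Inl`(A' - {v}) \<union> Inr`S'"
        using cl_a[of E, OF irr x False hv] B B' A'_def S'_def by simp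
      have m: "grim_move E A w A' w"
        unfolding grim_move_def A'_def using x nb by (intro bexI[of _ x]) auto
      have sub: "A' \<subseteq> A - {x}" using A'_def unfolding grim_clean_def by auto
      have "Rel E v A' w B' u'"
        unfolding Rel_def cl using clean_idem[of E "A - {x}", OF sym] A'_def sub Sv Sn uw u1 S'_def B'
        by (intro conjI exI[of _ S']) auto
      then show ?thesis using m by blast
    qed
  qed
qed

lemma init:
  assumes sym: "\<And>x y. E x y \<Longrightarrow> E y x" and irr: "\<And>x. \<not> E x x"
    and pos: "\<And>x. x \<in> V \<Longrightarrow> 0 < w x" and vV: "v \<in> V" and t: "w v = t"
  shows "Rel E v (grim_clean E V) w (grim_clean (split_E E v) (split_V V v t)) (split_w w)"
proof -
  define A where "A = grim_clean E V"
  define S where "S = (if v \<in> A then {1..t} else {})"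
  have t1: "{1..t} \<noteq> {}" using pos[OF vV] t by auto
  have sv: "split_V V v t = Inl`(V-{v}) \<union> Inr`{1..t}" unfolding split_V_def ..
  have i1: "{b\<in>V-{v}. (\<exists>c\<in>V-{v}. E b c) \<or> ({1..t}\<noteq>{} \<and> E b v)} = A - {v}"
    using t1 vV unfolding A_def grim_clean_def grim_isolated_def by auto
  have i2: "{j\<in>{1..t}. \<exists>c\<in>V-{v}. E v c} = S"
    using irr vV unfolding S_def A_def grim_clean_def grim_isolated_def by auto
  have B: "grim_clean (split_E E v) (split_V V v t) = Inl`(A-{v}) \<union> Inr`S"
    unfolding sv clean_split i1 i2 ..
  have cA: "grim_clean E A = A" using A_def clean_idem[of E V, OF sym] by simp
  have sub: "A \<subseteq> V" unfolding A_def grim_clean_def by auto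
  show ?thesis unfolding A_def[symmetric] Rel_def B using cA sub pos t S_def
    by (intro conjI exI[of _ S]) auto
qed

theorem lemma2p2:
  fixes V :: "'a set" and E :: "'a \<Rightarrow> 'a \<Rightarrow> bool" and w :: "'a \<Rightarrow> nat"
    and v :: 'a and t :: nat
  assumes "finite V"
    and "\<And>x y. E x y \<Longrightarrow> E y x"
    and "\<And>x. \<not> E x x"
    and "\<And>x. x \<in> V \<Longrightarrow> 0 < w x"
    and "v \<in> V"
    and "w v = t"
  shows "weighted_grim_N V E w \<longleftrightarrow>
         weighted_grim_N (split_V V v t) (split_E E v) (split_w w)"
proof -
  have R: "Rel E v (grim_clean E V) w (grim_clean (split_E E v) (split_V V v t)) (split_w w)"
    using init[of E V w v t] assms by blast
  have f: "\<And>A w B u A' w'. Rel E v A w B u \<Longrightarrow> grim_move E A w A' w' \<Longrightarrow>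
      \<exists>B' u'. grim_move (split_E E v) B u B' u' \<and> Rel E v A' w' B' u'"
    using fwd[of E, OF assms(2,3)] by blast
  have b: "\<And>A w B u B' u'. Rel E v A w B u \<Longrightarrow> grim_move (split_E E v) B u B' u' \<Longrightarrow>
      \<exists>A' w'. grim_move E A w A' w' \<and> Rel E v A' w' B' u'"
    using bwd[of E, OF assms(2,3)] by blast
  have h1: "grim_N E (grim_clean E V) w \<Longrightarrow> grim_N (split_E E v) (grim_clean (split_E E v) (split_V V v t)) (split_w w)"
    by (rule bisim(1)[where R="Rel E v" and Ga=E and Gb="split_E E v", OF f b _ R])
  have h2: "grim_N (split_E E v) (grim_clean (split_E E v) (split_V V v t)) (split_w w) \<Longrightarrow> grim_N E (grim_clean E V) w"
    by (rule bisim(1)[where R="\<lambda>B u A w. Rel E v A w B u" and Ga="split_E E v" and Gb=E, OF b f _ R])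
  show ?thesis unfolding weighted_grim_N_def using h1 h2 by blast
qed

end
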